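(* Let $M$ be a monoid, let $b_0,\dots,b_l,a,h\in M$ with $a$ and $h$ invertible, and suppose that $a^{-s}ha^s$ commutes with every $b_i$ for all $s\in\mathbb{Z}$. For integers $n_1,\dots,n_l$ put $u(t)=b_0t^{n_1}b_1t^{n_2}\cdots t^{n_l}b_l$ and $k=\sum_i n_i$. Then $$u(ah)=\begin{cases}\big(\prod_{j=1}^{k}a^{j}ha^{-j}\big)\,u(a) & \text{if } k>0,\\ \big(\prod_{j=0}^{-1-k}a^{-j}h^{-1}a^{j}\big)\,u(a) & \text{if } k<0,\\ u(a) & \text{if } k=0,\end{cases}$$ where the products are taken in increasing order of $j$. *)

theory Defs
  imports "HOL-Algebra.Group"
begin

definition oprod :: "('a, 'b) monoid_scheme \<Rightarrow> (int \<Rightarrow> 'a) \<Rightarrow> int list \<Rightarrow> 'a" where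
  "oprod G f js = foldr (\<lambda>j acc. f j \<otimes>\<^bsub>G\<^esub> acc) js \<one>\<^bsub>G\<^esub>"

fun word :: "('a, 'b) monoid_scheme \<Rightarrow> (nat \<Rightarrow> 'a) \<Rightarrow> (nat \<Rightarrow> int) \<Rightarrow> nat \<Rightarrow> 'a \<Rightarrow> 'a" where
  "word G b n 0 t = b 0"
| "word G b n (Suc l) t = word G b n l t \<otimes>\<^bsub>G\<^esub> (t [^]\<^bsub>G\<^esub> n (Suc l)) \<otimes>\<^bsub>G\<^esub> b (Suc l)"

end

theory Submission imports Defs begin

context group begin

definition QQ :: "'a \<Rightarrow> 'a \<Rightarrow> int \<Rightarrow> 'a" where
  "QQ a h z = (a \<otimes> h) [^] z \<otimes> a [^] (- z)"

lemma QQ_closed: "a \<in> carrier G \<Longrightarrow> h \<in> carrier G \<Longrightarrow> QQ a h z \<in> carrier G"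
  by (simp add: QQ_def)

lemma QQ_pow: "a \<in> carrier G \<Longrightarrow> h \<in> carrier G \<Longrightarrow> (a \<otimes> h) [^] z = QQ a h z \<otimes> a [^] z"
  by (simp add: QQ_def m_assoc int_pow_mult[symmetric])



lemma QQ_add: assumes "a \<in> carrier G" "h \<in> carrier G"
  shows "QQ a h (n + m) = QQ a h n \<otimes> (a [^] n \<otimes> QQ a h m \<otimes> a [^] (- n))"
proof -
  have ah: "a \<otimes> h \<in> carrier G" using assms by simp
  have e1: "(a \<otimes> h) [^] (n + m) = (a \<otimes> h) [^] n \<otimes> (a \<otimes> h) [^] m"
    using ah by (rule int_pow_mult)
  have e2: "a [^] (- (n + m)) = a [^] (- m) \<otimes> a [^] (- n)"
    using assms int_pow_mult[of a "-m" "-n"] by (simp add: add.commute)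
  have e3: "a [^] n \<otimes> a [^] (- n) = \<one>"
    using assms int_pow_mult[of a n "-n"] by simp
  have "QQ a h (n + m) = (a \<otimes> h) [^] n \<otimes> ((a \<otimes> h) [^] m \<otimes> a [^] (- m)) \<otimes> a [^] (- n)"
    unfolding QQ_def e1 e2 using assms by (simp add: m_assoc)
  also have "\<dots> = (QQ a h n \<otimes> a [^] n) \<otimes> QQ a h m \<otimes> a [^] (- n)"
    by (simp only: QQ_def[of a h m, symmetric] QQ_pow[OF assms, of n])
  finally show ?thesis using assms by (simp add: QQ_closed m_assoc)
qed


lemma QQ_0: "a \<in> carrier G \<Longrightarrow> h \<in> carrier G \<Longrightarrow> QQ a h 0 = \<one>"
  by (simp add: QQ_def)

lemma QQ_1: "a \<in> carrier G \<Longrightarrow> h \<in> carrier G \<Longrightarrow> QQ a h 1 = a \<otimes> h \<otimes> inv a"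
  by (simp add: QQ_def int_pow_neg)

lemma QQ_m1: "a \<in> carrier G \<Longrightarrow> h \<in> carrier G \<Longrightarrow> QQ a h (-1) = inv h"
  by (simp add: QQ_def int_pow_neg inv_mult_group m_assoc)

lemma conj_a: assumes "a \<in> carrier G" "y \<in> carrier G"
  shows "a [^] (m::int) \<otimes> (a \<otimes> y \<otimes> inv a) \<otimes> a [^] (- m) = a [^] (m+1) \<otimes> y \<otimes> a [^] (-(m+1))"
proof -
  have "a [^] (m+1) = a [^] m \<otimes> a" using assms int_pow_mult[of a m 1] by simp
  moreover have "a [^] (-(m+1)) = inv a \<otimes> a [^] (- m)"
    using assms int_pow_mult[of a "-1" "-m"] by (simp add: int_pow_neg add.commute)
  ultimately show ?thesis using assms by (simp add: m_assoc)
qed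

lemma QQ_suc: assumes "a \<in> carrier G" "h \<in> carrier G"
  shows "QQ a h (m + 1) = QQ a h m \<otimes> (a [^] (m+1) \<otimes> h \<otimes> a [^] (-(m+1)))"
  using assms by (simp add: QQ_add QQ_1 conj_a)

lemma QQ_pred: assumes "a \<in> carrier G" "h \<in> carrier G"
  shows "QQ a h (m - 1) = QQ a h m \<otimes> (a [^] m \<otimes> inv h \<otimes> a [^] (- m))"
  using assms QQ_add[OF assms, of m "-1"] by (simp add: QQ_m1)

lemma conj_inv: assumes "a \<in> carrier G" "h \<in> carrier G"
  shows "a [^] (m::int) \<otimes> inv h \<otimes> a [^] (- m) = inv (a [^] m \<otimes> h \<otimes> a [^] (- m))"
  using assms by (simp add: inv_mult_group int_pow_neg m_assoc)

lemma conj_QQ: assumes "a \<in> carrier G" "h \<in> carrier G"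
  shows "a [^] (s::int) \<otimes> QQ a h n \<otimes> a [^] (- s) = inv (QQ a h s) \<otimes> QQ a h (s + n)"
  using assms by (simp add: QQ_add QQ_closed m_assoc[symmetric])

lemma pow_conj_comm: assumes "a \<in> carrier G" "y \<in> carrier G"
  shows "a [^] (n::int) \<otimes> y = (a [^] n \<otimes> y \<otimes> a [^] (- n)) \<otimes> a [^] n"
proof -
  have "a [^] (- n) \<otimes> a [^] n = \<one>" using assms int_pow_mult[of a "-n" n] by simp
  thus ?thesis using assms by (simp add: m_assoc)
qed

lemma conj_conj: assumes "a \<in> carrier G" "y \<in> carrier G"
  shows "a [^] (k::int) \<otimes> (a [^] (n::int) \<otimes> y \<otimes> a [^] (- n)) \<otimes> a [^] (- k) = a [^] (k+n) \<otimes> y \<otimes> a [^] (- (k+n))"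
proof -
  have 1: "a [^] (k+n) = a [^] k \<otimes> a [^] n" using assms int_pow_mult by simp
  have 2: "a [^] (- (k+n)) = a [^] (-n) \<otimes> a [^] (-k)" using assms int_pow_mult[of a "-n" "-k"] by (simp add: add.commute)
  show ?thesis unfolding 1 2 using assms by (simp add: m_assoc)
qed


lemma oprod_closed: "(\<And>j. f j \<in> carrier G) \<Longrightarrow> oprod G f js \<in> carrier G"
  by (induction js) (auto simp: oprod_def)

lemma oprod_append: "(\<And>j. f j \<in> carrier G) \<Longrightarrow> oprod G f (xs @ ys) = oprod G f xs \<otimes> oprod G f ys"
proof (induction xs)
  case Nil
  then show ?case using oprod_closed by (simp add: oprod_def)
next
  case (Cons x xs)
  then show ?case using oprod_closed by (simp add: oprod_def m_assoc)
qed

lemma QQ_pos: assumes "a \<in> carrier G" "h \<in> carrier G"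
  shows "QQ a h (int k) = oprod G (\<lambda>j. a [^] j \<otimes> h \<otimes> a [^] (- j)) [1..int k]"
proof (induction k)
  case 0
  then show ?case using assms by (simp add: QQ_0 oprod_def)
next
  case (Suc k)
  have "[1..int (Suc k)] = [1..int k] @ [int k + 1]"
    using upto_rec2[of 1 "int k + 1"] by (simp add: add.commute)
  moreover have "oprod G (\<lambda>j. a [^] j \<otimes> h \<otimes> a [^] (- j)) [int k + 1] = a [^] (int k + 1) \<otimes> h \<otimes> a [^] (- (int k + 1))"
    using assms by (simp add: oprod_def)
  moreover have "QQ a h (int (Suc k)) = QQ a h (int k) \<otimes> (a [^] (int k + 1) \<otimes> h \<otimes> a [^] (- (int k + 1)))"
    using QQ_suc[OF assms, of "int k"] by (simp add: add.commute)
  ultimately show ?case using assms Suc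
    by (simp only: oprod_append int_pow_closed m_closed)
qed

lemma QQ_neg: assumes "a \<in> carrier G" "h \<in> carrier G"
  shows "QQ a h (-(int k + 1)) = oprod G (\<lambda>j. a [^] (- j) \<otimes> inv h \<otimes> a [^] j) [0..int k]"
proof (induction k)
  case 0
  then show ?case using assms by (simp add: QQ_m1 oprod_def)
next
  case (Suc k)
  have "[0..int (Suc k)] = [0..int k] @ [int k + 1]"
    using upto_rec2[of 0 "int k + 1"] by (simp add: add.commute)
  moreover have "QQ a h (-(int (Suc k) + 1)) = QQ a h (-(int k + 1)) \<otimes> (a [^] (-(int k + 1)) \<otimes> inv h \<otimes> a [^] (int k + 1))"
    using QQ_pred[OF assms, of "-(int k + 1)"] by (simp add: algebra_simps)
  moreover have "oprod G (\<lambda>j. a [^] (- j) \<otimes> inv h \<otimes> a [^] j) [int k + 1] = a [^] (-(int k + 1)) \<otimes> inv h \<otimes> a [^] (int k + 1)"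
    using assms by (simp add: oprod_def)
  ultimately show ?case using assms Suc
    by (simp only: oprod_append int_pow_closed m_closed inv_closed)
qed

lemma QQ_cases: assumes "a \<in> carrier G" "h \<in> carrier G"
  shows "QQ a h k = (if k > 0 then oprod G (\<lambda>j. a [^] j \<otimes> h \<otimes> a [^] (- j)) [1..k]
     else if k < 0 then oprod G (\<lambda>j. a [^] (- j) \<otimes> inv h \<otimes> a [^] j) [0..-1-k]
     else \<one>)"
proof -
  consider "k > 0" | "k < 0" | "k = 0" by linarith
  then show ?thesis
  proof cases
    case 1
    then show ?thesis using QQ_pos[OF assms, of "nat k"] by simp
  next
    case 2
    then show ?thesis using QQ_neg[OF assms, of "nat (-1-k)"] by simp
  next
    case 3
    then show ?thesis using assms by (simp add: QQ_0)
  qed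
qed


end

lemma nat_pow_units: "x [^]\<^bsub>G\<^esub> (k::nat) = x [^]\<^bsub>units_of G\<^esub> k"
  unfolding nat_pow_def units_of_def by simp
lemma (in monoid) int_pow_units: assumes "x \<in> Units G"
  shows "x [^] (z::int) = x [^]\<^bsub>units_of G\<^esub> z"
proof -
  have u: "x [^] (k::nat) \<in> Units G" for k
  proof (induction k)
    case 0 show ?case by simp
  next
    case (Suc k) then show ?case using assms by (simp only: nat_pow_Suc Units_m_closed)
  qed
  have i: "inv (x [^] (k::nat)) = inv\<^bsub>units_of G\<^esub> (x [^]\<^bsub>units_of G\<^esub> k)" for k
    using units_of_inv[OF u[of k]] nat_pow_units[where x=x and k=k and G=G] by simp
  have a: "x [^] z = (if z < 0 then inv (x [^] (nat (-z))) else x [^] (nat z))"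
    by (rule int_pow_def2)
  have b: "x [^]\<^bsub>units_of G\<^esub> z = (if z < 0 then inv\<^bsub>units_of G\<^esub> (x [^]\<^bsub>units_of G\<^esub> (nat (-z))) else x [^]\<^bsub>units_of G\<^esub> (nat z))"
    by (rule int_pow_def2)
  show ?thesis
    unfolding a b unfolding i unfolding nat_pow_units[where G=G] ..
qed

lemma oprod_units: "oprod G f js = oprod (units_of G) f js"
  unfolding oprod_def units_of_def by simp

theorem lemma1:
  fixes G (structure)
    and b :: "nat \<Rightarrow> 'a" and n :: "nat \<Rightarrow> int" and l :: nat and a h :: 'a
  assumes "monoid G"
    and "\<And>i. i \<le> l \<Longrightarrow> b i \<in> carrier G"
    and "a \<in> Units G" and "h \<in> Units G"
    and "\<And>(s::int) i. i \<le> l \<Longrightarrow>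
           (a [^] (- s) \<otimes> h \<otimes> a [^] s) \<otimes> b i = b i \<otimes> (a [^] (- s) \<otimes> h \<otimes> a [^] s)"
  defines "k \<equiv> (\<Sum>i = 1..l. n i)"
  shows "word G b n l (a \<otimes> h) =
    (if k > 0 then oprod G (\<lambda>j. a [^] j \<otimes> h \<otimes> a [^] (- j)) [1..k] \<otimes> word G b n l a
     else if k < 0 then oprod G (\<lambda>j. a [^] (- j) \<otimes> inv h \<otimes> a [^] j) [0..-1-k] \<otimes> word G b n l a
     else word G b n l a)"
proof -
  interpret M: monoid G by fact
  interpret U: group "units_of G" by (rule M.units_group)
  have aU: "a \<in> carrier (units_of G)" using assms(3) by (simp add: units_of_carrier)
  have hU: "h \<in> carrier (units_of G)" using assms(4) by (simp add: units_of_carrier)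
  have ahU: "a \<otimes> h \<in> Units G" using assms(3,4) by simp
  have aC: "a \<in> carrier G" "h \<in> carrier G" using assms(3,4) by auto
  have powU: "a [^]\<^bsub>units_of G\<^esub> (z::int) \<in> Units G" for z
    using U.int_pow_closed[OF aU] by (simp add: units_of_carrier)
  have powC: "a [^]\<^bsub>units_of G\<^esub> (z::int) \<in> carrier G" for z
    using powU by auto
  have QU: "U.QQ a h z \<in> Units G" for z
    using U.QQ_closed[OF aU hU] by (simp add: units_of_carrier)
  have QC: "U.QQ a h z \<in> carrier G" for z using QU by auto
  define C where "C Y \<longleftrightarrow> Y \<in> Units G \<and> (\<forall>i\<le>l. Y \<otimes> b i = b i \<otimes> Y)" for Y
  have C_mult: "C (X \<otimes> Y)" if "C X" "C Y" for X Y
  proof -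
    have XY: "X \<in> carrier G" "Y \<in> carrier G" "X \<otimes> b i = b i \<otimes> X" "Y \<otimes> b i = b i \<otimes> Y" if "i \<le> l" for i
      using \<open>C X\<close> \<open>C Y\<close> that unfolding C_def by auto
    have "X \<otimes> Y \<otimes> b i = b i \<otimes> (X \<otimes> Y)" if i: "i \<le> l" for i
    proof -
      have bi: "b i \<in> carrier G" using assms(2) i .
      have "X \<otimes> Y \<otimes> b i = X \<otimes> (Y \<otimes> b i)" using XY[OF i] bi M.m_assoc by metis
      also have "\<dots> = X \<otimes> (b i \<otimes> Y)" using XY[OF i] bi M.m_assoc by metis
      also have "\<dots> = (X \<otimes> b i) \<otimes> Y" using XY[OF i] bi M.m_assoc by metis
      also have "\<dots> = (b i \<otimes> X) \<otimes> Y" using XY[OF i] bi M.m_assoc by metis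
      also have "\<dots> = b i \<otimes> (X \<otimes> Y)" using XY[OF i] bi M.m_assoc by metis
      finally show ?thesis .
    qed
    then show ?thesis using that unfolding C_def by auto
  qed
  have C_inv: "C (inv\<^bsub>units_of G\<^esub> X)" if cx: "C X" for X
  proof -
    have X: "X \<in> Units G" "X \<in> carrier G" using that unfolding C_def by auto
    have iX: "inv\<^bsub>units_of G\<^esub> X = inv X" using M.units_of_inv X(1) by blast
    have "inv X \<otimes> b i = b i \<otimes> inv X" if i: "i \<le> l" for i
    proof -
      have bi: "b i \<in> carrier G" using assms(2) i .
      have "inv X \<otimes> b i = inv X \<otimes> (b i \<otimes> X) \<otimes> inv X"
        using X bi by (simp add: M.m_assoc)
      also have "\<dots> = inv X \<otimes> (X \<otimes> b i) \<otimes> inv X"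
        using cx i unfolding C_def by auto
      also have "\<dots> = b i \<otimes> inv X"
        using X bi by (simp add: M.m_assoc[symmetric])
      finally show ?thesis .
    qed
    then show ?thesis using X unfolding C_def iX by auto
  qed
  have hyp: "C (a [^]\<^bsub>units_of G\<^esub> (s::int) \<otimes> h \<otimes> a [^]\<^bsub>units_of G\<^esub> (- s))" for s
  proof -
    have e: "a [^] (- (-s)) \<otimes> h \<otimes> a [^] (-s) = a [^]\<^bsub>units_of G\<^esub> (s::int) \<otimes> h \<otimes> a [^]\<^bsub>units_of G\<^esub> (- s)"
      using M.int_pow_units[OF assms(3)] by simp
    have "\<forall>i\<le>l. (a [^]\<^bsub>units_of G\<^esub> (s::int) \<otimes> h \<otimes> a [^]\<^bsub>units_of G\<^esub> (- s)) \<otimes> b i = b i \<otimes> (a [^]\<^bsub>units_of G\<^esub> (s::int) \<otimes> h \<otimes> a [^]\<^bsub>units_of G\<^esub> (- s))"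
      using assms(5)[of _ "-s", unfolded e] by auto
    moreover have "a [^]\<^bsub>units_of G\<^esub> (s::int) \<otimes> h \<otimes> a [^]\<^bsub>units_of G\<^esub> (- s) \<in> Units G"
      using powU assms(4) by (simp only: M.Units_m_closed)
    ultimately show ?thesis unfolding C_def by blast
  qed
  have QCm: "C (U.QQ a h z)" for z
  proof (induction z rule: int_induct[where k=0])
    case base
    then show ?case using U.QQ_0[OF aU hU] assms(2) unfolding C_def by (simp add: units_of_one)
  next
    case (step1 i)
    have eq: "U.QQ a h (i + 1) = U.QQ a h i \<otimes> (a [^]\<^bsub>units_of G\<^esub> (i+1) \<otimes> h \<otimes> a [^]\<^bsub>units_of G\<^esub> (-(i+1)))"
      using U.QQ_suc[OF aU hU, of i] unfolding units_of_mult .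
    show ?case unfolding eq by (rule C_mult[OF step1(2) hyp])
  next
    case (step2 i)
    have eq: "U.QQ a h (i - 1) = U.QQ a h i \<otimes> inv\<^bsub>units_of G\<^esub> (a [^]\<^bsub>units_of G\<^esub> i \<otimes> h \<otimes> a [^]\<^bsub>units_of G\<^esub> (- i))"
      using U.QQ_pred[OF aU hU, of i] U.conj_inv[OF aU hU, of i] unfolding units_of_mult by simp
    show ?case unfolding eq by (rule C_mult[OF step2(2) C_inv[OF hyp]])
  qed
  have CC: "C (a [^]\<^bsub>units_of G\<^esub> s \<otimes> U.QQ a h m \<otimes> a [^]\<^bsub>units_of G\<^esub> (- s))" for s m :: int
  proof -
    have "a [^]\<^bsub>units_of G\<^esub> s \<otimes> U.QQ a h m \<otimes> a [^]\<^bsub>units_of G\<^esub> (- s) = inv\<^bsub>units_of G\<^esub> (U.QQ a h s) \<otimes> U.QQ a h (s + m)"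
      using U.conj_QQ[OF aU hU, of s m] unfolding units_of_mult .
    then show ?thesis using C_mult[OF C_inv[OF QCm] QCm] by simp
  qed
  have P0: "a [^]\<^bsub>units_of G\<^esub> (0::int) = \<one>" by (simp add: units_of_one)
  have wordS: "word G b n (Suc m) t = word G b n m t \<otimes> t [^]\<^bsub>units_of G\<^esub> n (Suc m) \<otimes> b (Suc m)"
    if "t \<in> Units G" for t m
    using M.int_pow_units[OF that] by simp
  have wC: "word G b n m a \<in> carrier G" if "m \<le> l" for m
    using that
  proof (induction m)
    case 0 then show ?case using assms(2) by simp
  next
    case (Suc m)
    then have "word G b n m a \<in> carrier G" by simp
    then show ?case unfolding wordS[OF assms(3)] using assms(2)[of "Suc m"] powC Suc.prems by simp
  qed
  have K: "(\<Sum>i = 1..Suc m. n i) = (\<Sum>i = 1..m. n i) + n (Suc m)" for m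
    by simp
  have W1: "\<forall>Y. Y \<in> Units G \<and> (\<forall>s::int. C (a [^]\<^bsub>units_of G\<^esub> s \<otimes> Y \<otimes> a [^]\<^bsub>units_of G\<^esub> (- s))) \<longrightarrow>
      word G b n m a \<otimes> Y = (a [^]\<^bsub>units_of G\<^esub> (\<Sum>i = 1..m. n i) \<otimes> Y \<otimes> a [^]\<^bsub>units_of G\<^esub> (- (\<Sum>i = 1..m. n i))) \<otimes> word G b n m a"
    if "m \<le> l" for m
    using that
  proof (induction m)
    case 0
    show ?case
    proof (intro allI impI)
      fix Y assume Y: "Y \<in> Units G \<and> (\<forall>s::int. C (a [^]\<^bsub>units_of G\<^esub> s \<otimes> Y \<otimes> a [^]\<^bsub>units_of G\<^esub> (- s)))"
      have "C Y" using conjunct2[OF Y, THEN spec, of 0] Y by (auto simp: units_of_one)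
      then show "word G b n 0 a \<otimes> Y = (a [^]\<^bsub>units_of G\<^esub> (\<Sum>i = 1..0. n i) \<otimes> Y \<otimes> a [^]\<^bsub>units_of G\<^esub> (- (\<Sum>i = 1..0. n i))) \<otimes> word G b n 0 a"
        using P0 Y unfolding C_def by auto
    qed
  next
    case (Suc m)
    show ?case
    proof (intro allI impI)
      fix Y assume Y: "Y \<in> Units G \<and> (\<forall>s::int. C (a [^]\<^bsub>units_of G\<^esub> s \<otimes> Y \<otimes> a [^]\<^bsub>units_of G\<^esub> (- s)))"
      define N where "N = n (Suc m)"
      define B where "B = b (Suc m)"
      define W where "W = word G b n m a"
      define KK where "KK = (\<Sum>i = 1..m. n i)"
      define Y' where "Y' = a [^]\<^bsub>units_of G\<^esub> N \<otimes> Y \<otimes> a [^]\<^bsub>units_of G\<^esub> (- N)"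
      have YC: "Y \<in> carrier G" using Y by auto
      have BC: "B \<in> carrier G" unfolding B_def using assms(2) Suc by simp
      have WC: "W \<in> carrier G" unfolding W_def using wC Suc by simp
      have "C Y" using conjunct2[OF Y, THEN spec, of 0] Y by (auto simp: units_of_one)
      then have YB: "Y \<otimes> B = B \<otimes> Y" unfolding C_def B_def using Suc by auto
      have Y'U: "Y' \<in> Units G" unfolding Y'_def using Y powU by (simp only: M.Units_m_closed)
      have Y'C: "Y' \<in> carrier G" using Y'U by auto
      have cc': "a [^]\<^bsub>units_of G\<^esub> s \<otimes> Y' \<otimes> a [^]\<^bsub>units_of G\<^esub> (- s) = a [^]\<^bsub>units_of G\<^esub> (s + N) \<otimes> Y \<otimes> a [^]\<^bsub>units_of G\<^esub> (- (s + N))" for s :: int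
        using U.conj_conj[OF aU, of Y s N] Y unfolding Y'_def units_of_mult units_of_carrier by simp
      have IH: "W \<otimes> Y' = (a [^]\<^bsub>units_of G\<^esub> KK \<otimes> Y' \<otimes> a [^]\<^bsub>units_of G\<^esub> (- KK)) \<otimes> W"
      proof -
        have "C (a [^]\<^bsub>units_of G\<^esub> s \<otimes> Y' \<otimes> a [^]\<^bsub>units_of G\<^esub> (- s))" for s :: int
          unfolding cc' using conjunct2[OF Y, THEN spec, of "s + N"] .
        then have "Y' \<in> Units G \<and> (\<forall>s::int. C (a [^]\<^bsub>units_of G\<^esub> s \<otimes> Y' \<otimes> a [^]\<^bsub>units_of G\<^esub> (- s)))" using Y'U by blast
        moreover have "m \<le> l" using Suc.prems by simp
        ultimately show ?thesis using Suc.IH unfolding W_def KK_def by blast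
      qed
      have pc: "a [^]\<^bsub>units_of G\<^esub> N \<otimes> Y = Y' \<otimes> a [^]\<^bsub>units_of G\<^esub> N"
        using U.pow_conj_comm[OF aU, of Y N] Y unfolding Y'_def units_of_mult units_of_carrier by simp
      have "W \<otimes> a [^]\<^bsub>units_of G\<^esub> N \<otimes> B \<otimes> Y = W \<otimes> (a [^]\<^bsub>units_of G\<^esub> N \<otimes> Y) \<otimes> B"
        using WC BC YC powC by (simp add: M.m_assoc YB)
      also have "\<dots> = (W \<otimes> Y') \<otimes> a [^]\<^bsub>units_of G\<^esub> N \<otimes> B"
        using WC BC YC powC Y'C by (simp add: M.m_assoc pc)
      also have "\<dots> = ((a [^]\<^bsub>units_of G\<^esub> KK \<otimes> Y' \<otimes> a [^]\<^bsub>units_of G\<^esub> (- KK)) \<otimes> W) \<otimes> a [^]\<^bsub>units_of G\<^esub> N \<otimes> B"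
        by (simp only: IH)
      also have "\<dots> = (a [^]\<^bsub>units_of G\<^esub> KK \<otimes> Y' \<otimes> a [^]\<^bsub>units_of G\<^esub> (- KK)) \<otimes> (W \<otimes> a [^]\<^bsub>units_of G\<^esub> N \<otimes> B)"
        using WC BC YC powC Y'C by (simp add: M.m_assoc)
      also have "\<dots> = (a [^]\<^bsub>units_of G\<^esub> (KK + N) \<otimes> Y \<otimes> a [^]\<^bsub>units_of G\<^esub> (- (KK + N))) \<otimes> (W \<otimes> a [^]\<^bsub>units_of G\<^esub> N \<otimes> B)"
        by (simp only: cc')
      finally have X: "W \<otimes> a [^]\<^bsub>units_of G\<^esub> N \<otimes> B \<otimes> Y = (a [^]\<^bsub>units_of G\<^esub> (KK + N) \<otimes> Y \<otimes> a [^]\<^bsub>units_of G\<^esub> (- (KK + N))) \<otimes> (W \<otimes> a [^]\<^bsub>units_of G\<^esub> N \<otimes> B)" .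
      have e1: "word G b n (Suc m) a = W \<otimes> a [^]\<^bsub>units_of G\<^esub> N \<otimes> B" unfolding W_def N_def B_def by (rule wordS[OF assms(3)])
      have e2: "(\<Sum>i = 1..Suc m. n i) = KK + N" unfolding KK_def N_def by (rule K)
      show "word G b n (Suc m) a \<otimes> Y = (a [^]\<^bsub>units_of G\<^esub> (\<Sum>i = 1..Suc m. n i) \<otimes> Y \<otimes> a [^]\<^bsub>units_of G\<^esub> (- (\<Sum>i = 1..Suc m. n i))) \<otimes> word G b n (Suc m) a"
        unfolding e1 e2 by (rule X)
    qed
  qed
  have W2: "word G b n m (a \<otimes> h) = U.QQ a h (\<Sum>i = 1..m. n i) \<otimes> word G b n m a"
    if "m \<le> l" for m
    using that
  proof (induction m)
    case 0
    then show ?case using U.QQ_0[OF aU hU] assms(2)[of 0] by (simp add: units_of_one)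
  next
    case (Suc m)
    define N where "N = n (Suc m)"
    define B where "B = b (Suc m)"
    define W where "W = word G b n m a"
    define W' where "W' = word G b n m (a \<otimes> h)"
    define KK where "KK = (\<Sum>i = 1..m. n i)"
    have BC: "B \<in> carrier G" unfolding B_def using assms(2) Suc by simp
    have WC: "W \<in> carrier G" unfolding W_def using wC Suc by simp
    have IH: "W' = U.QQ a h KK \<otimes> W" using Suc unfolding W'_def W_def KK_def by simp
    have pw: "(a \<otimes> h) [^]\<^bsub>units_of G\<^esub> N = U.QQ a h N \<otimes> a [^]\<^bsub>units_of G\<^esub> N"
      using U.QQ_pow[OF aU hU, of N] unfolding units_of_mult .
    have W1': "W \<otimes> U.QQ a h N = (a [^]\<^bsub>units_of G\<^esub> KK \<otimes> U.QQ a h N \<otimes> a [^]\<^bsub>units_of G\<^esub> (- KK)) \<otimes> W"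
      using W1[of m] Suc.prems QU CC unfolding W_def KK_def by simp
    have add: "U.QQ a h (KK + N) = U.QQ a h KK \<otimes> (a [^]\<^bsub>units_of G\<^esub> KK \<otimes> U.QQ a h N \<otimes> a [^]\<^bsub>units_of G\<^esub> (- KK))"
      using U.QQ_add[OF aU hU, of KK N] unfolding units_of_mult .
    have "W' \<otimes> (a \<otimes> h) [^]\<^bsub>units_of G\<^esub> N \<otimes> B = (U.QQ a h KK \<otimes> W) \<otimes> (U.QQ a h N \<otimes> a [^]\<^bsub>units_of G\<^esub> N) \<otimes> B"
      by (simp only: IH pw)
    also have "\<dots> = U.QQ a h KK \<otimes> (W \<otimes> U.QQ a h N) \<otimes> a [^]\<^bsub>units_of G\<^esub> N \<otimes> B"
      using WC BC QC powC by (simp add: M.m_assoc)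
    also have "\<dots> = U.QQ a h KK \<otimes> ((a [^]\<^bsub>units_of G\<^esub> KK \<otimes> U.QQ a h N \<otimes> a [^]\<^bsub>units_of G\<^esub> (- KK)) \<otimes> W) \<otimes> a [^]\<^bsub>units_of G\<^esub> N \<otimes> B"
      by (simp only: W1')
    also have "\<dots> = (U.QQ a h KK \<otimes> (a [^]\<^bsub>units_of G\<^esub> KK \<otimes> U.QQ a h N \<otimes> a [^]\<^bsub>units_of G\<^esub> (- KK))) \<otimes> (W \<otimes> a [^]\<^bsub>units_of G\<^esub> N \<otimes> B)"
      using WC BC QC powC by (simp add: M.m_assoc)
    also have "\<dots> = U.QQ a h (KK + N) \<otimes> (W \<otimes> a [^]\<^bsub>units_of G\<^esub> N \<otimes> B)"
      by (simp only: add)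
    finally have X: "W' \<otimes> (a \<otimes> h) [^]\<^bsub>units_of G\<^esub> N \<otimes> B = U.QQ a h (KK + N) \<otimes> (W \<otimes> a [^]\<^bsub>units_of G\<^esub> N \<otimes> B)" .
    have e1: "word G b n (Suc m) a = W \<otimes> a [^]\<^bsub>units_of G\<^esub> N \<otimes> B" unfolding W_def N_def B_def by (rule wordS[OF assms(3)])
    have e1': "word G b n (Suc m) (a \<otimes> h) = W' \<otimes> (a \<otimes> h) [^]\<^bsub>units_of G\<^esub> N \<otimes> B"
      unfolding W'_def N_def B_def by (rule wordS[OF ahU])
    have e2: "(\<Sum>i = 1..Suc m. n i) = KK + N" unfolding KK_def N_def by (rule K)
    show ?case unfolding e1 e1' e2 by (rule X)
  qed
  have main: "word G b n l (a \<otimes> h) = U.QQ a h k \<otimes> word G b n l a"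
    unfolding k_def using W2 by simp
  have qc: "U.QQ a h k = (if k > 0 then oprod (units_of G) (\<lambda>j. a [^]\<^bsub>units_of G\<^esub> j \<otimes> h \<otimes> a [^]\<^bsub>units_of G\<^esub> (- j)) [1..k]
     else if k < 0 then oprod (units_of G) (\<lambda>j. a [^]\<^bsub>units_of G\<^esub> (- j) \<otimes> inv\<^bsub>units_of G\<^esub> h \<otimes> a [^]\<^bsub>units_of G\<^esub> j) [0..-1-k]
     else \<one>)"
    using U.QQ_cases[OF aU hU, of k] unfolding units_of_mult units_of_one .
  have lC: "word G b n l a \<in> carrier G" using wC by simp
  show ?thesis
    unfolding M.int_pow_units[OF assms(3)] M.units_of_inv[OF assms(4), symmetric] oprod_units[of G]
    using main qc lC by simp
qed

end
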